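(* Let $G$ be a finite simple graph of order $p$, and let $\mathbb{F}$ be a field with $\operatorname{char}\mathbb{F}\neq 2$ such that either $\operatorname{char}\mathbb{F}=0$ or $p<2+\operatorname{char}\mathbb{F}$. Then a linear functional $\lambda$ on $U_G$ is a short functional if and only if there exist an edge $[a,b]$ of $G$ and a nonzero scalar $\alpha\in\mathbb{F}$ such that $\lambda(a)=\lambda(b)=\alpha$ and $\lambda(c)=0$ for every vertex $c\notin\{a,b\}$.
   Context: $G$ has vertex set $VG$ and edge set $EG$; the edge with endpoints $x,y$ is written $[x,y]$, and $x\sim y$ means $x,y$ are adjacent. $U_G$ denotes the $\mathbb{F}$-vector space with basis $VG$ (formal linear combinations of vertices). A short functional is a nonzero linear functional $\lambda$ on $U_G$ satisfying: (1) if $x\neq y$ are nonadjacent vertices, then $\lambda(x)=0$ or $\lambda(y)=0$; (2) if $\lambda(x)\neq 0$, then $\lambda(x)=\sum_{t\sim x}\lambda(t)$, the sum over the vertices $t$ adjacent to $x$. (These are exactly the functionals $\lambda$ for which, with $\mu([x,y])=\lambda(x)\lambda(y)$ on edges, the map $u+\mathfrak{z}\mapsto\lambda(u)r+\mu(\mathfrak{z})\mathfrak{s}$ is a homomorphism of the normal graph algebra of $G$ into the algebra with basis $r,\mathfrak{s}$ and sole nonzero product $r^2=\mathfrak{s}$.) *)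

theory Defs
  imports Main
begin

definition simple_graph :: "'v set \<Rightarrow> ('v \<Rightarrow> 'v \<Rightarrow> bool) \<Rightarrow> bool" where
  "simple_graph V E \<longleftrightarrow> finite V \<and> (\<forall>x y. E x y \<longrightarrow> x \<in> V \<and> y \<in> V) \<and>
     (\<forall>x y. E x y \<longrightarrow> E y x) \<and> (\<forall>x. \<not> E x x)"

text \<open>A linear functional on U_G (vector space with basis V) is determined by its
values on the basis V; we represent it by lam :: 'v => 'f, only its values on V matter.\<close>
definition short_functional ::
  "'v set \<Rightarrow> ('v \<Rightarrow> 'v \<Rightarrow> bool) \<Rightarrow> ('v \<Rightarrow> 'f::field) \<Rightarrow> bool" where
  "short_functional V E lam \<longleftrightarrow>
     (\<exists>x\<in>V. lam x \<noteq> 0) \<and>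
     (\<forall>x\<in>V. \<forall>y\<in>V. x \<noteq> y \<and> \<not> E x y \<longrightarrow> lam x = 0 \<or> lam y = 0) \<and>
     (\<forall>x\<in>V. lam x \<noteq> 0 \<longrightarrow> lam x = (\<Sum>t\<in>{t\<in>V. E t x}. lam t))"

end

theory Submission
  imports Defs
begin

lemma one_ne_two: "(1::'a::field) \<noteq> 2"
proof
  assume h: "(1::'a) = 2"
  have "(2::'a) - 1 = 1" by simp
  then have "(1::'a) - 1 = 1" by (simp only: h[symmetric])
  then show False by simp
qed

lemma two_nz:
  assumes "CHAR('f::field) \<noteq> 2"
  shows "(2::'f) \<noteq> 0"
proof
  assume "(2::'f) = 0"
  then have "of_nat 2 = (0::'f)" by simp
  then have "CHAR('f) dvd 2" by (simp only: of_nat_eq_0_iff_char_dvd)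
  then have "CHAR('f) \<le> 2" by (simp add: dvd_imp_le)
  have "CHAR('f) \<noteq> 0"
  proof
    assume "CHAR('f) = 0"
    with \<open>CHAR('f) dvd 2\<close> show False by simp
  qed
  note this \<open>CHAR('f) \<le> 2\<close>
  moreover have "CHAR('f) \<noteq> Suc 0" by simp
  ultimately show False using assms by linarith
qed

theorem theorem4p1:
  fixes V :: "'v set" and E :: "'v \<Rightarrow> 'v \<Rightarrow> bool" and lam :: "'v \<Rightarrow> 'f::field"
  assumes "simple_graph V E"
    and "CHAR('f) \<noteq> 2"
    and "CHAR('f) = 0 \<or> card V < 2 + CHAR('f)"
  shows "short_functional V E lam \<longleftrightarrow>
    (\<exists>a b \<alpha>. E a b \<and> \<alpha> \<noteq> 0 \<and> lam a = \<alpha> \<and> lam b = \<alpha> \<and>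
       (\<forall>c\<in>V. c \<notin> {a, b} \<longrightarrow> lam c = 0))"
proof
  have fin: "finite V" and EV: "\<And>x y. E x y \<Longrightarrow> x \<in> V \<and> y \<in> V"
    and sym: "\<And>x y. E x y \<Longrightarrow> E y x" and irr: "\<And>x. \<not> E x x"
    using assms(1) unfolding simple_graph_def by blast+
  have two: "(2::'f) \<noteq> 0" using two_nz assms(2) by blast
  assume sf: "short_functional V E lam"
  define S where "S = {x\<in>V. lam x \<noteq> 0}"
  have finS: "finite S" using fin S_def by simp
  obtain x0 where x0: "x0 \<in> S" using sf unfolding short_functional_def S_def by blast
  have clique: "\<And>x y. x \<in> S \<Longrightarrow> y \<in> S \<Longrightarrow> x \<noteq> y \<Longrightarrow> E x y"
    using sf unfolding short_functional_def S_def by blast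
  define T where "T = sum lam S"
  have key: "\<And>x. x \<in> S \<Longrightarrow> 2 * lam x = T"
  proof -
    fix x assume xS: "x \<in> S"
    have "lam x = (\<Sum>t\<in>{t\<in>V. E t x}. lam t)"
      using sf xS unfolding short_functional_def S_def by blast
    also have "\<dots> = (\<Sum>t\<in>{t\<in>V. E t x} \<inter> S. lam t)"
      by (rule sum.mono_neutral_right) (use fin in \<open>auto simp: S_def\<close>)
    also have "{t\<in>V. E t x} \<inter> S = S - {x}"
      using xS clique sym irr by (auto simp: S_def)
    also have "(\<Sum>t\<in>S - {x}. lam t) = T - lam x"
      using finS xS by (simp add: T_def sum_diff1)
    finally show "2 * lam x = T" by (simp add: algebra_simps mult_2)
  qed
  define c where "c = lam x0"
  have c0: "c \<noteq> 0" using x0 by (simp add: c_def S_def)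
  have lamS: "\<And>x. x \<in> S \<Longrightarrow> lam x = c"
  proof -
    fix x assume "x \<in> S"
    then have "2 * lam x = 2 * c" using key x0 c_def by metis
    then show "lam x = c" using two by simp
  qed
  define k where "k = card S"
  have "T = of_nat k * c" using lamS by (simp add: T_def k_def)
  moreover have "T = 2 * c" using key x0 c_def by metis
  ultimately have kc: "of_nat k = (2::'f)" using c0 by simp
  have k1: "k \<ge> 1" using x0 finS k_def by (metis One_nat_def Suc_leI card_gt_0_iff empty_iff)
  have kV: "k \<le> card V" using fin k_def S_def by (simp add: card_mono)
  have k2: "k = 2"
  proof (cases "k = 1")
    case True
    then have "(1::'f) = 2" using kc by simp
    then show ?thesis using one_ne_two by blast
  next
    case False
    then have "k = (k - 2) + 2" using k1 by simp
    then have "of_nat (k-2) + 2 = (2::'f)" using kc by (metis of_nat_add of_nat_numeral)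
    then have "of_nat (k-2) = (0::'f)" by simp
    then have d: "CHAR('f) dvd (k-2)" by (simp only: of_nat_eq_0_iff_char_dvd)
    show ?thesis
    proof (cases "CHAR('f) = 0")
      case True then show ?thesis using d False k1 by simp
    next
      case False
      then have "k - 2 < CHAR('f)" using assms(3) kV by linarith
      then have "k - 2 = 0" using d by (metis dvd_imp_le not_less gr0I)
      then show ?thesis using \<open>k \<noteq> 1\<close> k1 by simp
    qed
  qed
  then have "\<exists>a b. S = {a, b} \<and> a \<noteq> b" unfolding k_def card_2_iff .
  then obtain a b where ab: "S = {a, b}" "a \<noteq> b" by blast
  have Eab: "E a b" using clique ab by blast
  have la: "lam a = c" "lam b = c" using lamS ab by blast+
  have rest: "\<forall>x\<in>V. x \<notin> {a, b} \<longrightarrow> lam x = 0" using ab(1) unfolding S_def by blast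
  show "\<exists>a b \<alpha>. E a b \<and> \<alpha> \<noteq> 0 \<and> lam a = \<alpha> \<and> lam b = \<alpha> \<and>
       (\<forall>c\<in>V. c \<notin> {a, b} \<longrightarrow> lam c = 0)"
    using Eab la rest c0 by blast
next
  have fin: "finite V" and EV: "\<And>x y. E x y \<Longrightarrow> x \<in> V \<and> y \<in> V"
    and sym: "\<And>x y. E x y \<Longrightarrow> E y x" and irr: "\<And>x. \<not> E x x"
    using assms(1) unfolding simple_graph_def by blast+
  assume "\<exists>a b \<alpha>. E a b \<and> \<alpha> \<noteq> 0 \<and> lam a = \<alpha> \<and> lam b = \<alpha> \<and>
       (\<forall>c\<in>V. c \<notin> {a, b} \<longrightarrow> lam c = 0)"
  then obtain a b \<alpha> where h: "E a b" "\<alpha> \<noteq> 0" "lam a = \<alpha>" "lam b = \<alpha>"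
    "\<forall>c\<in>V. c \<notin> {a, b} \<longrightarrow> lam c = 0" by blast
  have ab: "a \<noteq> b" "a \<in> V" "b \<in> V" using h(1) irr EV by metis+
  have nb: "\<And>x y. x \<in> {a,b} \<Longrightarrow> y \<in> {a,b} \<Longrightarrow> x \<noteq> y \<Longrightarrow> (\<Sum>t\<in>{t\<in>V. E t x}. lam t) = lam y"
  proof -
    fix x y assume xy: "x \<in> {a,b}" "y \<in> {a,b}" "x \<noteq> y"
    have "E y x" using xy h(1) sym by auto
    have "(\<Sum>t\<in>{t\<in>V. E t x}. lam t) = (\<Sum>t\<in>{y}. lam t)"
      apply (rule sum.mono_neutral_left[symmetric])
      using fin \<open>E y x\<close> ab xy h(5) irr by auto
    then show "(\<Sum>t\<in>{t\<in>V. E t x}. lam t) = lam y" by simp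
  qed
  show "short_functional V E lam"
    unfolding short_functional_def
  proof (intro conjI ballI impI)
    show "\<exists>x\<in>V. lam x \<noteq> 0" using ab h by blast
  next
    fix x y assume "x \<in> V" "y \<in> V" "x \<noteq> y \<and> \<not> E x y"
    then show "lam x = 0 \<or> lam y = 0"
    proof (cases "lam x = 0 \<or> lam y = 0")
      case False
      then have "x \<in> {a,b}" "y \<in> {a,b}" using h(5) \<open>x \<in> V\<close> \<open>y \<in> V\<close> by blast+
      then have "E x y" using \<open>x \<noteq> y \<and> \<not> E x y\<close> h(1) sym by blast
      then show ?thesis using \<open>x \<noteq> y \<and> \<not> E x y\<close> by blast
    qed
  next
    fix x assume "x \<in> V" "lam x \<noteq> 0"
    then have "x \<in> {a,b}" using h(5) by blast
    then show "lam x = (\<Sum>t\<in>{t\<in>V. E t x}. lam t)"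
      using nb[of x] ab h by auto
  qed
qed

end
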